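(* Let $X\subset\mathbb{R}^d$ be a complementary regular set, $f:\mathbb{R}^d\to\mathbb{R}$ a $C^2$ function, and $c$ a regular value of $f_{|X}$. Let $\eta:\mathbb{R}^d\to\mathbb{R}^d$ be smooth with $\sup_x\|\eta(x)\|\le1$, and $f_r(x)=f(x+r\eta(x))$. Then, in the Hausdorff distance, $\lim_{r\to0^+}\big(X^{-r}\cap f_r^{-1}(-\infty,c]\big)=X\cap f^{-1}(-\infty,c]$.
   Context: $d_A(x)=\inf_{a\in A}\|x-a\|$; $\mathcal{C}A:=\overline{\mathbb{R}^d\setminus A}$; $X^{-r}=\{x:d_{\mathcal{C}X}(x)\ge r\}$. Clarke gradient $\partial\phi(x)$: convex hull of limits $\lim_i\nabla\phi(x_i)$, $x_i\to x$, $\phi$ differentiable at $x_i$; $\Delta(B)=\inf_{b\in B}\|b\|$. Reach of closed $A$: supremum of $t\ge0$ such that every $x$ with $d_A(x)<t$ has a unique nearest point in $A$; $\operatorname{reach}_\mu(A)=\sup\{s:\Delta(\partial d_A(x))\ge\mu\text{ for all }x\text{ with }0<d_A(x)\le s\}$. Complementary regular: compact $X$ with $\overline{\operatorname{int}X}=X$, $\operatorname{reach}_\mu(X)>0$ for some $\mu\in(0,1]$, $\operatorname{reach}(\mathcal{C}X)>0$. Tangent cone $\operatorname{Tan}(A,x)$: cone generated by limits of $(x_n-x)/\|x_n-x\|$, $x_n\in A\setminus\{x\}$, $x_n\to x$; polar $B^\circ=\{u:\langle u,b\rangle\le0\ \forall b\in B\}$; $\operatorname{Nor}(A,x)=\operatorname{Tan}(A,x)^\circ$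 for $A$ of positive reach; $\operatorname{Nor}(X,x):=-\operatorname{Nor}(\mathcal{C}X,x)$ for $x\in\partial X$, $\{0\}$ for interior $x$. $x\in X$ is critical for $f_{|X}$ if $\nabla f(x)\in-\operatorname{Nor}(X,x)$; $c$ is regular if $X\cap f^{-1}(c)$ contains no critical point. *)

theory Defs
  imports "HOL-Analysis.Analysis"
begin

text \<open>Distance function d_A(x) is the library's infdist x A.\<close>

definition compl_closure :: "'a::euclidean_space set \<Rightarrow> 'a set" where
  "compl_closure A = closure (UNIV - A)"

definition inner_parallel :: "'a::euclidean_space set \<Rightarrow> real \<Rightarrow> 'a set" where
  "inner_parallel X r = {x. infdist x (compl_closure X) \<ge> r}"

definition clarke_gradient :: "('a::euclidean_space \<Rightarrow> real) \<Rightarrow> 'a \<Rightarrow> 'a set" where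
  "clarke_gradient \<phi> x = convex hull
     {v. \<exists>xs gs. xs \<longlonglongrightarrow> x \<and> (\<forall>i. GDERIV \<phi> (xs i) :> gs i) \<and> gs \<longlonglongrightarrow> v}"

definition Delta :: "'a::euclidean_space set \<Rightarrow> real" where
  "Delta B = Inf (norm ` B)"

definition reach :: "'a::euclidean_space set \<Rightarrow> ereal" where
  "reach A = Sup {ereal t | t. t \<ge> 0 \<and>
     (\<forall>x. infdist x A < t \<longrightarrow> (\<exists>!a. a \<in> A \<and> dist x a = infdist x A))}"

definition reach_mu :: "real \<Rightarrow> 'a::euclidean_space set \<Rightarrow> ereal" where
  "reach_mu \<mu> A = Sup {ereal s | s. s \<ge> 0 \<and>
     (\<forall>x. 0 < infdist x A \<and> infdist x A \<le> s \<longrightarrow>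
          Delta (clarke_gradient (\<lambda>y. infdist y A) x) \<ge> \<mu>)}"

definition complementary_regular :: "'a::euclidean_space set \<Rightarrow> bool" where
  "complementary_regular X \<longleftrightarrow> compact X \<and> closure (interior X) = X \<and>
     (\<exists>\<mu>. 0 < \<mu> \<and> \<mu> \<le> 1 \<and> reach_mu \<mu> X > 0) \<and> reach (compl_closure X) > 0"

definition unit_tangents :: "'a::euclidean_space set \<Rightarrow> 'a \<Rightarrow> 'a set" where
  "unit_tangents A x = {u. \<exists>xs. (\<forall>n. xs n \<in> A - {x}) \<and> xs \<longlonglongrightarrow> x \<and>
       (\<lambda>n. (1 / norm (xs n - x)) *\<^sub>R (xs n - x)) \<longlonglongrightarrow> u}"

definition tan_cone :: "'a::euclidean_space set \<Rightarrow> 'a \<Rightarrow> 'a set" where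
  "tan_cone A x = insert 0 {t *\<^sub>R u | t u. t \<ge> 0 \<and> u \<in> unit_tangents A x}"

definition polar :: "'a::euclidean_space set \<Rightarrow> 'a set" where
  "polar B = {u. \<forall>b\<in>B. inner u b \<le> 0}"

definition nor_cone :: "'a::euclidean_space set \<Rightarrow> 'a \<Rightarrow> 'a set" where
  "nor_cone A x = polar (tan_cone A x)"

definition nor_cone_X :: "'a::euclidean_space set \<Rightarrow> 'a \<Rightarrow> 'a set" where
  "nor_cone_X X x = (if x \<in> interior X then {0} else uminus ` nor_cone (compl_closure X) x)"

definition critical_point :: "('a::euclidean_space \<Rightarrow> real) \<Rightarrow> 'a set \<Rightarrow> 'a \<Rightarrow> bool" where
  "critical_point f X x \<longleftrightarrow> x \<in> X \<and>
     (\<exists>g. GDERIV f x :> g \<and> g \<in> uminus ` nor_cone_X X x)"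

definition regular_value :: "('a::euclidean_space \<Rightarrow> real) \<Rightarrow> 'a set \<Rightarrow> real \<Rightarrow> bool" where
  "regular_value f X c \<longleftrightarrow> (\<forall>x \<in> X \<inter> f -` {c}. \<not> critical_point f X x)"

fun Ck :: "nat \<Rightarrow> ('a::euclidean_space \<Rightarrow> real) \<Rightarrow> bool" where
  "Ck 0 f = continuous_on UNIV f"
| "Ck (Suc k) f = ((\<forall>x. f differentiable (at x)) \<and>
      (\<forall>i\<in>Basis. Ck k (\<lambda>x. frechet_derivative f (at x) i)))"

definition smooth_map :: "('a::euclidean_space \<Rightarrow> 'b::euclidean_space) \<Rightarrow> bool" where
  "smooth_map \<eta> \<longleftrightarrow> (\<forall>k. \<forall>b\<in>Basis. Ck k (\<lambda>x. inner (\<eta> x) b))"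

definition hausdorff_dist :: "'a::euclidean_space set \<Rightarrow> 'a set \<Rightarrow> ereal" where
  "hausdorff_dist A B =
     (if A = {} \<and> B = {} then 0
      else if A = {} \<or> B = {} then \<infinity>
      else max (SUP a\<in>A. ereal (infdist a B)) (SUP b\<in>B. ereal (infdist b A)))"

end

theory Submission
  imports Defs
begin


locale ureach =
  fixes A :: "'a::euclidean_space set" and t :: real
  assumes clA: "closed A" and tpos: "0 < t"
    and uniq: "\<forall>x. infdist x A < t \<longrightarrow> (\<exists>!a. a \<in> A \<and> dist x a = infdist x A)"
begin

definition pr where "pr x = (SOME a. a \<in> A \<and> dist x a = infdist x A)"
definition nv where "nv x = (1 / infdist x A) *\<^sub>R (x - pr x)"

lemma nonempty: "A \<noteq> {}"
proof
  assume "A = {}"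
  then have "infdist 0 A < t" using tpos by (simp add: infdist_def)
  then show False using uniq \<open>A = {}\<close> by blast
qed

lemma pr: "pr x \<in> A" "dist x (pr x) = infdist x A"
proof -
  obtain a where "a \<in> A" "infdist x A = dist x a"
    using infdist_attains_inf[OF clA nonempty] by blast
  then have "\<exists>a. a \<in> A \<and> dist x a = infdist x A" by auto
  then have "pr x \<in> A \<and> dist x (pr x) = infdist x A"
    unfolding pr_def by (rule someI_ex)
  then show "pr x \<in> A" "dist x (pr x) = infdist x A" by auto
qed

lemma pr_unique: "infdist x A < t \<Longrightarrow> a \<in> A \<Longrightarrow> dist x a = infdist x A \<Longrightarrow> a = pr x"
  using uniq pr by blast

lemma pr_near: "dist x (pr y) \<le> infdist x A + 2 * dist y x"
proof -
  have "dist x (pr y) \<le> dist x y + dist y (pr y)" by (rule dist_triangle)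
  also have "\<dots> = dist x y + infdist y A" using pr by simp
  also have "infdist y A \<le> infdist x A + dist y x" by (rule infdist_triangle)
  finally show ?thesis by (simp add: dist_commute)
qed

lemma pr_cont_at:
  assumes x: "infdist x A < t" and e: "e > 0"
  shows "\<exists>d>0. \<forall>y. dist y x < d \<longrightarrow> dist (pr y) (pr x) < e"
proof -
  define K where "K = cball x (infdist x A + 1) \<inter> (A \<inter> {p. e \<le> dist p (pr x)})"
  have cK: "compact K" unfolding K_def
    by (intro compact_Int_closed compact_cball closed_Int clA closed_Collect_le continuous_intros)
  obtain m where m: "m > 0" "\<forall>p\<in>K. m \<le> dist x p - infdist x A"
  proof (cases "K = {}")
    case True then show ?thesis using that[of 1] by auto
  next
    case False
    have "continuous_on K (\<lambda>p. dist x p - infdist x A)" by (intro continuous_intros)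
    from continuous_attains_inf[OF cK False this]
    obtain p0 where p0: "p0 \<in> K" "\<forall>p\<in>K. dist x p0 - infdist x A \<le> dist x p - infdist x A"
      by blast
    have "p0 \<in> A" "e \<le> dist p0 (pr x)" using p0 unfolding K_def by auto
    then have "p0 \<noteq> pr x" using e by auto
    then have "dist x p0 \<noteq> infdist x A" using pr_unique[OF x \<open>p0 \<in> A\<close>] by auto
    moreover have "infdist x A \<le> dist x p0" using \<open>p0 \<in> A\<close> by (rule infdist_le)
    ultimately show ?thesis using that[of "dist x p0 - infdist x A"] p0 by auto
  qed
  show ?thesis
  proof (intro exI[of _ "min (1/2) (m/2)"] conjI allI impI)
    show "0 < min (1/2) (m/2)" using m by auto
    fix y assume y: "dist y x < min (1/2) (m/2)"
    show "dist (pr y) (pr x) < e"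
    proof (rule ccontr)
      assume nc: "\<not> ?thesis"
      have h: "dist x (pr y) \<le> infdist x A + 2 * dist y x" by (rule pr_near)
      then have "pr y \<in> K" unfolding K_def using nc pr(1) y
        by (auto simp: dist_commute)
      then show False using m h y by force
    qed
  qed
qed

lemma pr_cont: "continuous_on {x. infdist x A < t} pr"
  unfolding continuous_on_iff using pr_cont_at by blast

abbreviation "dd y \<equiv> infdist y A"

lemma nv: assumes "0 < dd x" shows "norm (nv x) = 1" "x - pr x = dd x *\<^sub>R nv x"
  using assms pr[of x] by (auto simp: nv_def dist_norm norm_minus_commute)

lemma nv_cont: "continuous_on {x. 0 < dd x \<and> dd x < t} nv"
proof -
  have "continuous_on {x. 0 < dd x \<and> dd x < t} pr"
    by (rule continuous_on_subset[OF pr_cont]) auto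
  then show ?thesis unfolding nv_def
    by (intro continuous_intros) auto
qed

lemma keyineq:
  fixes D h g d c :: real
  assumes "0 \<le> d" "0 \<le> h" "0 \<le> g" "g \<le> 1" "h \<le> D"
    and "d^2 \<le> D^2 - 2*h*D*c + h^2" "c \<ge> 1 - g^2/2"
  shows "d \<le> D - h*(1 - g - g^2/2)"
proof -
  have "h*D*c \<ge> h*D*(1 - g^2/2)" using assms by (intro mult_left_mono) auto
  then have "d^2 \<le> D^2 - 2*h*D*(1 - g^2/2) + h^2" using assms(6) by linarith
  also have "\<dots> \<le> (D - h*(1 - g - g^2/2))^2"
  proof -
    have "D*h*g \<ge> h*h*g" using assms by (intro mult_right_mono) (auto simp: mult_right_mono)
    moreover have "(g + g^2/2)^2 \<ge> g^2" using assms by (intro power_mono) auto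
    moreover have "h^2 * (g + g^2/2)^2 \<ge> h^2 * g^2" using calculation(2) by (simp add: mult_left_mono)
    ultimately show ?thesis by (simp add: power2_eq_square algebra_simps)
  qed
  finally have "d^2 \<le> (D - h*(1 - g - g^2/2))^2" .
  moreover have "0 \<le> D - h*(1 - g - g^2/2)"
  proof -
    have "0 \<le> g^2" by simp
    then have "1 - g - g^2/2 \<le> 1" using assms by linarith
    then have "h*(1 - g - g^2/2) \<le> h*1" using assms by (intro mult_left_mono) auto
    then show ?thesis using assms by linarith
  qed
  ultimately show ?thesis using power2_le_imp_le by blast
qed

lemma ext_step:
  assumes a: "a \<in> A" and y0: "dd y0 = dist y0 a" "0 < dd y0" "dd y0 \<le> s" and st: "s < t"
    and k: "0 < k" "k \<le> 1"
  shows "\<exists>y. dd y = s \<and> dist y a - dd y \<le> k * s"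
proof -
  define d0 where "d0 = dd y0"
  have d0: "0 < d0" "d0 \<le> s" using y0 d0_def by auto
  define s' where "s' = (s + t) / 2"
  have s': "s < s'" "s' < t" using st by (auto simp: s'_def)
  define K where "K = cball a (2 * s + 1) \<inter> ({y. d0/2 \<le> dd y} \<inter> {y. dd y \<le> s'})"
  have cK: "compact K" unfolding K_def
    by (intro compact_Int_closed compact_cball closed_Int closed_Collect_le continuous_intros)
  have Ksub: "K \<subseteq> {x. 0 < dd x \<and> dd x < t}" using d0 s' by (auto simp: K_def)
  have "uniformly_continuous_on K nv"
    by (rule compact_uniformly_continuous[OF continuous_on_subset[OF nv_cont Ksub] cK])
  define g where "g = k / (2 * (1 + k))"
  have g: "0 < g" "g \<le> 1/4" "2 * g * (1 + k) = k" using k by (auto simp: g_def field_simps)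
  obtain \<delta> where \<delta>: "\<delta> > 0" "\<forall>y1\<in>K. \<forall>y2\<in>K. dist y2 y1 < \<delta> \<longrightarrow> dist (nv y2) (nv y1) < g"
    using \<open>uniformly_continuous_on K nv\<close> g(1) unfolding uniformly_continuous_on_def by metis
  define W where "W = cball a (2 * s) \<inter> ({y. d0 \<le> dd y} \<inter> ({y. dd y \<le> s} \<inter> {y. dist y a - dd y \<le> k * (dd y - d0)}))"
  have cW: "compact W" unfolding W_def
    by (intro compact_Int_closed compact_cball closed_Int closed_Collect_le continuous_intros)
  have s0: "0 < s" using d0 by auto
  have "y0 \<in> W" using y0 d0 s0 unfolding W_def d0_def by (auto simp: dist_commute)
  then have "W \<noteq> {}" by auto
  have "continuous_on W dd" by (intro continuous_intros)
  from continuous_attains_sup[OF cW \<open>W \<noteq> {}\<close> this]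
  obtain y where yW: "y \<in> W" and ymax: "\<forall>z\<in>W. dd z \<le> dd y" by blast
  have yd: "d0 \<le> dd y" "dd y \<le> s" "dist y a - dd y \<le> k * (dd y - d0)" using yW by (auto simp: W_def)
  have "dd y = s"
  proof (rule ccontr)
    assume "dd y \<noteq> s"
    then have lt: "dd y < s" using yd by auto
    define h where "h = min (\<delta>/2) (min (s - dd y) (min (d0/2) (1/2)))"
    have h: "0 < h" "h < \<delta>" "h \<le> s - dd y" "h \<le> d0/2" "h \<le> 1/2"
      using \<delta> lt d0 unfolding h_def by linarith+
    define y' where "y' = y + h *\<^sub>R nv y"
    have ny: "norm (nv y) = 1" using nv(1)[of y] yd d0 by auto
    have dy'y: "dist y' y = h" using ny h by (simp add: y'_def dist_norm)
    have dd1: "dd y' \<le> dd y + h" "dd y - h \<le> dd y'"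
      using infdist_triangle[of y' A y] infdist_triangle[of y A y'] dy'y by (auto simp: dist_commute)
    have dya: "dist y a \<le> 2 * s" using yW by (auto simp: W_def dist_commute)
    have dy'a: "dist y' a \<le> dist y a + h" using dist_triangle[of y' a y] dy'y by simp
    have yK: "y \<in> K" using yd d0 dya s' by (auto simp: K_def dist_commute)
    have y'K: "y' \<in> K" using yd d0 dya s' dd1 dy'a h by (auto simp: K_def dist_commute)
    have nclose: "dist (nv y') (nv y) < g" using \<delta>(2) yK y'K dy'y h by auto
    define D where "D = dd y'"
    have Dpos: "0 < D" using dd1 h d0 yd by (auto simp: D_def)
    have ny': "norm (nv y') = 1" using nv(1)[of y'] Dpos by (auto simp: D_def)
    have eq1: "y' - pr y' = D *\<^sub>R nv y'" using nv(2)[of y'] Dpos by (auto simp: D_def)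
    have "y - pr y' = D *\<^sub>R nv y' - h *\<^sub>R nv y" using eq1 by (simp add: y'_def algebra_simps)
    moreover have "(norm (D *\<^sub>R nv y' - h *\<^sub>R nv y))^2 = D^2 - 2*h*D*inner (nv y') (nv y) + h^2"
    proof -
      have "inner (nv y') (nv y') = 1" "inner (nv y) (nv y) = 1" using ny ny'
        by (simp_all add: power2_norm_eq_inner[symmetric])
      then show ?thesis
        unfolding power2_norm_eq_inner
        by (simp add: inner_diff_left inner_diff_right
          inner_commute algebra_simps power2_eq_square)
    qed
    ultimately have "(norm (y - pr y'))^2 = D^2 - 2*h*D*inner (nv y') (nv y) + h^2" by simp
    moreover have "dd y \<le> norm (y - pr y')" using infdist_le[OF pr(1)[of y'], of y] by (simp add: dist_norm)
    moreover have "0 \<le> dd y" by (rule infdist_nonneg)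
    ultimately have sq: "(dd y)^2 \<le> D^2 - 2*h*D*inner (nv y') (nv y) + h^2"
      by (metis power_mono)
    have "(norm (nv y' - nv y))^2 = 2 - 2 * inner (nv y') (nv y)"
    proof -
      have "inner (nv y') (nv y') = 1" "inner (nv y) (nv y) = 1" using ny ny'
        by (simp_all add: power2_norm_eq_inner[symmetric])
      then show ?thesis unfolding power2_norm_eq_inner
        by (simp add: inner_diff_left inner_diff_right inner_commute)
    qed
    moreover have "(norm (nv y' - nv y))^2 \<le> g^2" using nclose
      by (intro power_mono) (auto simp: dist_norm)
    ultimately have ip: "inner (nv y') (nv y) \<ge> 1 - g^2/2" by simp
    have hD: "h \<le> D" using dd1 h yd d0 by (auto simp: D_def)
    have key: "dd y \<le> D - h*(1 - g - g^2/2)"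
      by (rule keyineq[OF infdist_nonneg _ _ _ hD sq ip]) (use h g in auto)
    define th where "th = g + g^2/2"
    have th: "th \<le> 2*g" "0 \<le> th" using g by (auto simp: th_def power2_eq_square)
    have th1: "th * (1 + k) \<le> k" using th(1) g(3) k
      by (metis mult_right_mono add_nonneg_nonneg less_eq_real_def order_trans zero_le_one)
    have gain: "D - dd y \<ge> h * (1 - th)" using key by (simp add: th_def algebra_simps)
    have "th < 1" using th g by linarith
    then have "h * (1 - th) > 0" using h by (intro mult_pos_pos) auto
    then have Dgt: "D > dd y" using gain by linarith
    have "y' \<in> W"
    proof -
      have c1: "d0 \<le> D" "D \<le> s" using Dgt yd dd1 h by (auto simp: D_def)
      have "h * (th * (1 + k)) \<le> h * k" using th1 h by (intro mult_left_mono) auto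
      then have "h * th \<le> k * (h * (1 - th))" by (simp add: algebra_simps)
      also have "\<dots> \<le> k * (D - dd y)" using gain k by (intro mult_left_mono) auto
      finally have "dist y' a - D \<le> k * (D - d0)" using dy'a yd gain
        by (simp add: algebra_simps)
      moreover have "dist y' a \<le> 2 * s"
        using \<open>dist y' a - D \<le> k * (D - d0)\<close> c1 k d0
        by (smt (verit, best) mult_left_le_one_le)
      ultimately show ?thesis using c1 by (auto simp: W_def D_def dist_commute)
    qed
    then show False using ymax Dgt by (auto simp: D_def)
  qed
  moreover have "dist y a - dd y \<le> k * s"
  proof -
    have "k * (dd y - d0) \<le> k * s" using k yd d0 by (intro mult_left_mono) auto
    then show ?thesis using yd by linarith
  qed
  ultimately show ?thesis by blast
qed

lemma ext:
  assumes a: "a \<in> A" and y0: "dd y0 = dist y0 a" "0 < dd y0" "dd y0 \<le> s" and st: "s < t"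
  shows "\<exists>y. dd y = s \<and> dist y a = s"
proof -
  have s0: "0 < s" using y0 by linarith
  define S where "S = cball a (2 * s) \<inter> {y. dd y = s}"
  have cS: "compact S" unfolding S_def
    by (intro compact_Int_closed compact_cball closed_Collect_eq continuous_intros)
  have inS: "y \<in> S" if "dd y = s" "dist y a - dd y \<le> k * s" "k \<le> 1" "0 < k" for y k
  proof -
    have "k * s \<le> 1 * s" using that s0 by (intro mult_right_mono) auto
    then show ?thesis using that by (auto simp: S_def dist_commute)
  qed
  obtain y1 where "dd y1 = s" "dist y1 a - dd y1 \<le> 1 * s"
    using ext_step[OF assms, of 1] by auto
  then have "S \<noteq> {}" using inS[of y1 1] by auto
  have "continuous_on S (\<lambda>y. dist y a - dd y)" by (intro continuous_intros)
  from continuous_attains_inf[OF cS \<open>S \<noteq> {}\<close> this]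
  obtain ys where ys: "ys \<in> S" "\<forall>z\<in>S. dist ys a - dd ys \<le> dist z a - dd z" by blast
  have ge: "dd ys \<le> dist ys a" using infdist_le[OF a, of ys] .
  have "dist ys a - dd ys \<le> 0"
  proof (rule ccontr)
    assume "\<not> ?thesis"
    then have p: "dist ys a - dd ys > 0" by simp
    define k where "k = min 1 ((dist ys a - dd ys) / (2 * s))"
    have k: "0 < k" "k \<le> 1" using p s0 by (auto simp: k_def)
    obtain y where y: "dd y = s" "dist y a - dd y \<le> k * s"
      using ext_step[OF assms k] by auto
    have "k * s \<le> (dist ys a - dd ys) / (2 * s) * s"
      using s0 by (intro mult_right_mono) (auto simp: k_def)
    also have "\<dots> = (dist ys a - dd ys) / 2" using s0 by simp
    finally have "dist y a - dd y \<le> (dist ys a - dd ys) / 2" using y by linarith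
    moreover have "y \<in> S" using inS[OF y k(2) k(1)] .
    ultimately show False using ys p by force
  qed
  then show ?thesis using ge ys by (auto simp: S_def)
qed

lemma boundary_ball:
  assumes b: "b \<in> A" "b \<in> closure (- A)" and s: "0 < s" "s < t"
  shows "\<exists>x. dd x = s \<and> dist x b = s"
proof -
  have near: "\<exists>x. dd x = s \<and> dist x b < s + e" if e: "0 < e" "e \<le> s" for e
  proof -
    obtain y where y: "y \<in> - A" "dist y b < e/2"
      using b(2) e unfolding closure_approachable by (meson half_gt_zero)
    have dpos: "0 < dd y" using infdist_pos_not_in_closed[OF clA nonempty] y by auto
    have "dd y \<le> dist y b" using infdist_le[OF b(1)] .
    then have dle: "dd y < e/2" using y by linarith
    have "dd y < t" using dle e s by linarith
    have eq: "dd y = dist y (pr y)" using pr by simp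
    obtain x where x: "dd x = s" "dist x (pr y) = s"
      using ext[OF pr(1) eq dpos _ s(2)] dle e by force
    have "dist x b \<le> dist x (pr y) + dist (pr y) y + dist y b"
      by (metis dist_triangle add.assoc add_left_mono order_trans)
    then have "dist x b < s + e" using x y eq dle by (simp add: dist_commute)
    then show ?thesis using x by blast
  qed
  define S where "S = cball b (2 * s) \<inter> {x. dd x = s}"
  have cS: "compact S" unfolding S_def
    by (intro compact_Int_closed compact_cball closed_Collect_eq continuous_intros)
  have inS: "x \<in> S" if "dd x = s" "dist x b < s + e" "e \<le> s" for x e
    using that by (auto simp: S_def dist_commute)
  obtain x1 where "dd x1 = s" "dist x1 b < s + s" using near[of s] s by auto
  then have "S \<noteq> {}" using inS[of x1 s] by auto
  have "continuous_on S (\<lambda>x. dist x b)" by (intro continuous_intros)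
  from continuous_attains_inf[OF cS \<open>S \<noteq> {}\<close> this]
  obtain xs where xs: "xs \<in> S" "\<forall>z\<in>S. dist xs b \<le> dist z b" by blast
  have ge: "s \<le> dist xs b" using infdist_le[OF b(1), of xs] xs(1) by (auto simp: S_def)
  have "dist xs b \<le> s"
  proof (rule ccontr)
    assume nt: "\<not> dist xs b \<le> s"
    define e where "e = min s ((dist xs b - s) / 2)"
    have e: "0 < e" "e \<le> s" using nt s by (auto simp: e_def)
    obtain x where x: "dd x = s" "dist x b < s + e" using near[OF e] by auto
    have "x \<in> S" using inS[OF x e(2)] .
    then have "dist xs b \<le> dist x b" using xs by auto
    moreover have "e \<le> (dist xs b - s) / 2" unfolding e_def by (rule min.cobounded2)
    ultimately have "dist xs b < s + (dist xs b - s) / 2" using x(2) by linarith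
    then show False using nt by (simp add: field_simps)
  qed
  then show ?thesis using ge xs by (auto simp: S_def)
qed

end

lemma polar_ball:
  fixes A :: "'a::euclidean_space set"
  assumes b: "b \<in> A" and x: "infdist x A = s" "dist x b = s" and s: "0 < s"
  shows "(1/s) *\<^sub>R (x - b) \<in> polar (tan_cone A b)"
proof -
  have main: "inner (x - b) w \<le> 0" if w: "w \<in> unit_tangents A b" for w
  proof -
    obtain xs where xs: "\<forall>n. xs n \<in> A - {b}" "xs \<longlonglongrightarrow> b"
      "(\<lambda>n. (1 / norm (xs n - b)) *\<^sub>R (xs n - b)) \<longlonglongrightarrow> w"
      using w unfolding unit_tangents_def by blast
    have ineq: "inner (x - b) ((1 / norm (xs n - b)) *\<^sub>R (xs n - b)) \<le> norm (xs n - b) / 2" for n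
    proof -
      define v where "v = xs n - b"
      have vn: "v \<noteq> 0" using xs(1) by (auto simp: v_def)
      have "s \<le> dist x (xs n)" using infdist_le[of "xs n" A x] xs(1) x by auto
      then have "s^2 \<le> (norm ((x - b) - v))^2" using s
        by (simp add: v_def dist_norm algebra_simps)
      also have "\<dots> = (norm (x - b))^2 - 2 * inner (x - b) v + (norm v)^2"
        unfolding power2_norm_eq_inner by (simp add: inner_diff_left inner_diff_right inner_commute)
      finally have "2 * inner (x - b) v \<le> (norm v)^2" using x by (simp add: dist_norm)
      then have "inner (x - b) v \<le> norm v / 2 * norm v" by (simp add: power2_eq_square)
      then have "inner (x - b) v / norm v \<le> norm v / 2" using vn by (simp add: pos_divide_le_eq)
      then show ?thesis by (simp add: v_def)
    qed
    have l1: "(\<lambda>n. inner (x - b) ((1 / norm (xs n - b)) *\<^sub>R (xs n - b))) \<longlonglongrightarrow> inner (x - b) w"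
      by (intro tendsto_intros xs(3))
    have "(\<lambda>n. xs n - b) \<longlonglongrightarrow> 0" using LIM_zero[OF xs(2)] .
    then have "(\<lambda>n. norm (xs n - b)) \<longlonglongrightarrow> 0" by (rule tendsto_norm_zero)
    then have l2: "(\<lambda>n. norm (xs n - b) / 2) \<longlonglongrightarrow> 0" by (rule tendsto_divide_zero)
    show ?thesis using tendsto_le[OF trivial_limit_sequentially l2 l1] ineq by auto
  qed
  show ?thesis unfolding polar_def tan_cone_def
  proof (safe)
    fix t :: real and w assume "0 \<le> t" "w \<in> unit_tangents A b"
    then have "t * inner (x - b) w \<le> 0" using main by (simp add: mult_nonneg_nonpos)
    then show "inner ((1/s) *\<^sub>R (x - b)) (t *\<^sub>R w) \<le> 0" using s
      by (simp add: mult_nonneg_nonpos divide_simps mult.commute)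
  qed simp
qed

lemma decrease_point:
  fixes f :: "'a::euclidean_space \<Rightarrow> real"
  assumes g: "GDERIV f b :> g" and w: "inner g w < 0" and h0: "0 < h0"
    and S: "\<forall>h. 0 < h \<and> h < h0 \<longrightarrow> b + h *\<^sub>R w \<in> S" and d: "0 < \<delta>"
  shows "\<exists>y\<in>S. dist y b < \<delta> \<and> f y < f b"
proof -
  have fd: "(f has_derivative (\<lambda>h. inner h g)) (at (b + 0 *\<^sub>R w))" using g by (simp add: gderiv_def)
  have "((\<lambda>h. b + h *\<^sub>R w) has_derivative (\<lambda>h. h *\<^sub>R w)) (at 0)"
    by (auto intro!: derivative_eq_intros)
  from has_derivative_compose[OF this fd]
  have "((\<lambda>h. f (b + h *\<^sub>R w)) has_derivative (\<lambda>h. inner (h *\<^sub>R w) g)) (at 0)" .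
  moreover have "(\<lambda>h. inner (h *\<^sub>R w) g) = (*) (inner g w)" by (auto simp: inner_commute)
  ultimately have "((\<lambda>h. f (b + h *\<^sub>R w)) has_real_derivative (inner g w)) (at 0)"
    by (simp add: has_field_derivative_def)
  from DERIV_neg_dec_right[OF this w]
  obtain d1 where d1: "d1 > 0" "\<forall>h>0. h < d1 \<longrightarrow> f (b + (0 + h) *\<^sub>R w) < f (b + 0 *\<^sub>R w)" by blast
  define h where "h = min (d1/2) (min (h0/2) (\<delta> / (2 * (norm w + 1))))"
  have "0 < norm w + 1" by (simp add: add_nonneg_pos)
  then have "0 < \<delta> / (2 * (norm w + 1))" using d by (intro divide_pos_pos) auto
  then have hpos: "0 < h" using d1 h0 unfolding h_def by auto
  have "h \<le> \<delta> / (2 * (norm w + 1))" by (simp add: h_def)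
  then have "h * (2 * (norm w + 1)) \<le> \<delta>" using \<open>0 < norm w + 1\<close> by (subst (asm) pos_le_divide_eq) auto
  then have "h * (norm w + 1) \<le> \<delta> / 2" by (simp add: algebra_simps)
  moreover have "h * norm w \<le> h * (norm w + 1)" using hpos by simp
  ultimately have "h * norm w < \<delta>" using hpos d by linarith
  then have "dist (b + h *\<^sub>R w) b < \<delta>" using hpos by (simp add: dist_norm)
  moreover have "f (b + h *\<^sub>R w) < f b" using d1(2) hpos by (auto simp: h_def)
  moreover have "b + h *\<^sub>R w \<in> S" using S hpos h0 by (auto simp: h_def)
  ultimately show ?thesis by blast
qed

lemma gderiv_ex:
  fixes f :: "'a::euclidean_space \<Rightarrow> real"
  assumes "f differentiable (at x)" shows "\<exists>g. GDERIV f x :> g"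
proof -
  obtain D where D: "(f has_derivative D) (at x)" using assms by (auto simp: differentiable_def)
  have lin: "linear D" using has_derivative_linear[OF D] .
  define g where "g = (\<Sum>i\<in>Basis. D i *\<^sub>R i)"
  have "D h = inner h g" for h
  proof -
    have "D h = (\<Sum>i\<in>Basis. (inner h i) * D i)" using Linear_Algebra.linear_componentwise[OF lin, of h 1] by simp
    also have "\<dots> = inner h g" by (simp add: g_def inner_sum_right mult.commute)
    finally show ?thesis .
  qed
  then have "D = (\<lambda>h. inner h g)" by auto
  then show ?thesis using D by (auto simp: gderiv_def)
qed

lemma CX_eq: "compl_closure X = - interior X"
  unfolding compl_closure_def by (metis Compl_eq_Diff_UNIV closure_interior double_compl)

lemma key_point:
  fixes X :: "'a::euclidean_space set" and f :: "'a \<Rightarrow> real"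
  assumes cl: "closure (interior X) = X"
    and ur: "ureach (compl_closure X) t"
    and fd: "\<forall>x. f differentiable (at x)"
    and reg: "regular_value f X c"
    and b: "b \<in> X" "f b \<le> c" and \<delta>: "0 < \<delta>"
  shows "\<exists>y\<in>interior X. dist y b < \<delta> \<and> f y < c"
proof -
  have fc: "continuous_on UNIV f" using fd
    by (simp add: continuous_at_imp_continuous_on differentiable_imp_continuous_within)
  obtain g where g: "GDERIV f b :> g" using gderiv_ex fd by blast
  have crit: "\<not> critical_point f X b" if "f b = c" using reg b that unfolding regular_value_def by auto
  show ?thesis
  proof (cases "f b < c")
    case True
    have "open {y. f y < c}" by (rule open_Collect_less[OF fc continuous_on_const]) 
    then obtain e where e: "e > 0" "ball b e \<subseteq> {y. f y < c}" using True by (meson mem_Collect_eq openE)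
    have "b \<in> closure (interior X)" using cl b by simp
    then obtain y where y: "y \<in> interior X" "dist y b < min \<delta> e"
      unfolding closure_approachable using e \<delta> by (meson min_less_iff_conj)
    then have "f y < c" using e by (auto simp: dist_commute)
    then show ?thesis using y by auto
  next
    case False
    then have fb: "f b = c" using b by auto
    show ?thesis
    proof (cases "b \<in> interior X")
      case True
      have "g \<noteq> 0"
      proof
        assume "g = 0"
        then have "critical_point f X b" using g b True
          unfolding critical_point_def nor_cone_X_def by auto
        then show False using crit fb by auto
      qed
      obtain e where e: "e > 0" "ball b e \<subseteq> interior X" using True open_interior openE by blast
      define w where "w = - g"
      have gw: "inner g w < 0" using \<open>g \<noteq> 0\<close> by (simp add: w_def)
      have nw: "0 < norm w + 1" by (simp add: add_nonneg_pos)
      define h0 where "h0 = e / (norm w + 1)"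
      have h0: "0 < h0" using e nw by (simp add: h0_def)
      have "\<forall>h. 0 < h \<and> h < h0 \<longrightarrow> b + h *\<^sub>R w \<in> interior X"
      proof (intro allI impI)
        fix h assume h: "0 < h \<and> h < h0"
        then have "h * (norm w + 1) < e" using nw by (simp add: h0_def pos_less_divide_eq)
        then have "h * norm w < e" using h by (simp add: algebra_simps)
        then have "b + h *\<^sub>R w \<in> ball b e" using h by (simp add: dist_norm)
        then show "b + h *\<^sub>R w \<in> interior X" using e by auto
      qed
      from decrease_point[OF g gw h0 this \<delta>] show ?thesis using fb by auto
    next
      case notint: False
      interpret ureach "compl_closure X" t by (rule ur)
      have bC: "b \<in> compl_closure X" using notint CX_eq by auto
      have "- compl_closure X = interior X" using CX_eq[of X] by simp
      then have "b \<in> closure (- compl_closure X)" using cl b by simp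
      define s where "s = t / 2"
      have s: "0 < s" "s < t" using tpos by (auto simp: s_def)
      obtain x where x: "infdist x (compl_closure X) = s" "dist x b = s"
        using boundary_ball[OF bC \<open>b \<in> closure (- compl_closure X)\<close> s] by blast
      define u where "u = (1/s) *\<^sub>R (x - b)"
      have uN: "u \<in> nor_cone (compl_closure X) b"
        unfolding u_def nor_cone_def by (rule polar_ball[OF bC x s(1)])
      have nu: "norm u = 1" using x s by (simp add: u_def dist_norm)
      have xeq: "x = b + s *\<^sub>R u" using s by (simp add: u_def)
      have gN: "g \<notin> nor_cone (compl_closure X) b"
      proof
        assume "g \<in> nor_cone (compl_closure X) b"
        then have "g \<in> uminus ` nor_cone_X X b" using notint
          unfolding nor_cone_X_def by (auto simp: image_image)
        then have "critical_point f X b" using g b unfolding critical_point_def by blast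
        then show False using crit fb by auto
      qed
      have scal: "a *\<^sub>R v \<in> nor_cone (compl_closure X) b" if "v \<in> nor_cone (compl_closure X) b" "0 \<le> a" for a v
        using that unfolding nor_cone_def polar_def by (auto simp: mult_nonneg_nonpos)
      have "g \<noteq> 0" using gN scal[OF uN, of 0] by auto
      define w where "w = norm g *\<^sub>R u - g"
      have uw_ge: "inner u g \<le> norm g" using norm_cauchy_schwarz[of u g] nu by simp
      have uw: "inner u w = norm g - inner u g" using nu
        by (simp add: w_def inner_diff_right power2_norm_eq_inner[symmetric])
      have uwpos: "inner u w > 0"
      proof (rule ccontr)
        assume "\<not> inner u w > 0"
        then have eqg: "inner u g = norm g" using uw uw_ge by auto
        have gg: "inner g g = (norm g)^2" "inner u u = (norm u)^2" by (simp_all add: power2_norm_eq_inner)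
        have "(norm w)^2 = (norm g)^2 * (norm u)^2 - 2 * norm g * inner u g + (norm g)^2"
          unfolding w_def power2_norm_eq_inner[of "norm g *\<^sub>R u - g"] gg
          by (simp add: inner_diff_left inner_diff_right inner_commute algebra_simps power2_eq_square gg)
        then have "w = 0" using eqg nu by (simp add: power2_eq_square)
        then have "g = norm g *\<^sub>R u" by (simp add: w_def)
        then show False using gN scal[OF uN, of "norm g"] by auto
      qed
      have gw: "inner g w < 0"
      proof -
        have "inner g w = norm g * inner g u - (norm g)^2"
          by (simp add: w_def inner_diff_right power2_norm_eq_inner)
        also have "\<dots> = - norm g * inner u w" using uw by (simp add: inner_commute power2_eq_square right_diff_distrib)
        finally show ?thesis using uwpos \<open>g \<noteq> 0\<close> by (simp add: mult_pos_pos)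
      qed
      define h0 where "h0 = 2 * s * inner u w / ((norm w)^2 + 1)"
      have h0: "0 < h0" using s uwpos by (simp add: h0_def add_nonneg_pos)
      have "\<forall>h. 0 < h \<and> h < h0 \<longrightarrow> b + h *\<^sub>R w \<in> interior X"
      proof (intro allI impI)
        fix h assume h: "0 < h \<and> h < h0"
        have "h * ((norm w)^2 + 1) < 2 * s * inner u w"
          using h by (simp add: h0_def pos_less_divide_eq add_nonneg_pos)
        then have lt: "h * (norm w)^2 < 2 * s * inner u w" using h by (simp add: algebra_simps)
        have e1: "b + h *\<^sub>R w - x = h *\<^sub>R w - s *\<^sub>R u" by (simp add: xeq)
        have ww: "inner w w = (norm w)^2" "inner u u = 1" using nu power2_norm_eq_inner[of u] by (simp_all add: power2_norm_eq_inner)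
        have "(norm (b + h *\<^sub>R w - x))^2 = h^2 * (norm w)^2 - 2 * h * s * inner u w + s^2"
          unfolding e1 power2_norm_eq_inner[of "h *\<^sub>R w - s *\<^sub>R u"]
          by (simp add: inner_diff_left inner_diff_right inner_commute ww algebra_simps power2_eq_square)
        also have "\<dots> < s^2"
        proof -
          have "h * (h * (norm w)^2) < h * (2 * s * inner u w)" using lt h by (intro mult_strict_left_mono) auto
          then show ?thesis by (simp add: power2_eq_square algebra_simps)
        qed
        finally have "norm (b + h *\<^sub>R w - x) < s" using s by (smt (verit) power_mono norm_ge_zero)
        then have "dist x (b + h *\<^sub>R w) < infdist x (compl_closure X)" using x by (simp add: dist_norm norm_minus_commute)
        then have "b + h *\<^sub>R w \<notin> compl_closure X" using infdist_le[of "b + h *\<^sub>R w" "compl_closure X" x] by linarith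
        then show "b + h *\<^sub>R w \<in> interior X" using CX_eq by auto
      qed
      from decrease_point[OF g gw h0 this \<delta>] show ?thesis using fb by auto
    qed
  qed
qed



lemma hd_nonneg: "0 \<le> hausdorff_dist A B"
proof -
  have "0 \<le> (SUP a\<in>A. ereal (infdist a B))" if ne: "A \<noteq> {}"
  proof -
    obtain a where "a \<in> A" using ne by blast
    then have "ereal (infdist a B) \<le> (SUP a\<in>A. ereal (infdist a B))" by (rule SUP_upper)
    moreover have "0 \<le> ereal (infdist a B)" by (simp add: infdist_nonneg)
    ultimately show ?thesis by (rule order_trans[rotated])
  qed
  then show ?thesis unfolding hausdorff_dist_def by (auto simp: le_max_iff_disj)
qed

lemma hd_bound:
  assumes "A \<noteq> {}" "B \<noteq> {}" "\<forall>a\<in>A. \<exists>b\<in>B. dist a b < e" "\<forall>b\<in>B. \<exists>a\<in>A. dist b a < e"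
  shows "hausdorff_dist A B \<le> ereal e"
proof -
  have "infdist a B \<le> e" if "a \<in> A" for a
    using assms(3) that infdist_le[of _ B a] by (meson less_imp_le order_trans)
  then have 1: "(SUP a\<in>A. ereal (infdist a B)) \<le> ereal e" by (intro SUP_least) auto
  have "infdist b A \<le> e" if "b \<in> B" for b
    using assms(4) that infdist_le[of _ A b] by (meson less_imp_le order_trans)
  then have 2: "(SUP b\<in>B. ereal (infdist b A)) \<le> ereal e" by (intro SUP_least) auto
  show ?thesis using assms 1 2 unfolding hausdorff_dist_def by auto
qed

theorem mainTheorem11:
  fixes X :: "'a::euclidean_space set" and f :: "'a \<Rightarrow> real"
    and \<eta> :: "'a \<Rightarrow> 'a" and c :: real
  assumes "complementary_regular X"
    and "Ck 2 f"
    and "regular_value f X c"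
    and "smooth_map \<eta>"
    and "\<forall>x. norm (\<eta> x) \<le> 1"
  shows "((\<lambda>r. hausdorff_dist
              (inner_parallel X r \<inter> (\<lambda>x. f (x + r *\<^sub>R \<eta> x)) -` {..c})
              (X \<inter> f -` {..c})) \<longlongrightarrow> 0) (at_right 0)"
proof -
  define CX where "CX = compl_closure X"
  define A0 where "A0 = X \<inter> f -` {..c}"
  define Ar where "Ar r = inner_parallel X r \<inter> (\<lambda>x. f (x + r *\<^sub>R \<eta> x)) -` {..c}" for r
  have cX: "compact X" and cl: "closure (interior X) = X" and rch: "0 < reach CX"
    using assms(1) unfolding complementary_regular_def CX_def by auto
  obtain t where t: "0 < t" "\<forall>x. infdist x CX < t \<longrightarrow> (\<exists>!a. a \<in> CX \<and> dist x a = infdist x CX)"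
  proof -
    from rch obtain z where z: "z \<in> {ereal t | t. t \<ge> 0 \<and>
       (\<forall>x. infdist x CX < t \<longrightarrow> (\<exists>!a. a \<in> CX \<and> dist x a = infdist x CX))}" "0 < z"
      unfolding reach_def less_Sup_iff by blast
    then show ?thesis using that by auto
  qed
  have ur: "ureach CX t"
  proof
    show "closed CX" by (simp add: CX_def compl_closure_def)
  qed (use t in auto)
  have "Ck (Suc (Suc 0)) f" using assms(2) by (simp add: numeral_2_eq_2)
  then have fd: "\<forall>x. f differentiable (at x)" by simp
  have fc: "isCont f x" for x using fd differentiable_imp_continuous_within by blast
  have fcon: "continuous_on UNIV f" using fc by (simp add: continuous_at_imp_continuous_on)
  have CXne: "CX \<noteq> {}" using ureach.nonempty[OF ur] .
  have CXeq: "CX = - interior X" unfolding CX_def by (rule CX_eq)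
  have clCX: "closed CX" unfolding CX_def compl_closure_def by simp
  have sub: "Ar r \<subseteq> X" if "r > 0" for r
  proof
    fix a assume "a \<in> Ar r"
    then have "r \<le> infdist a CX" by (simp add: Ar_def inner_parallel_def CX_def)
    then have "a \<notin> CX" using that by auto
    then show "a \<in> X" using CXeq interior_subset by blast
  qed
  have ev_in: "eventually (\<lambda>r. y \<in> Ar r) (at_right 0)" if y: "y \<in> interior X" "f y < c" for y
  proof -
    have p: "0 < infdist y CX" using infdist_pos_not_in_closed[OF clCX CXne] y CXeq by auto
    have e1: "eventually (\<lambda>r. r < infdist y CX) (at_right 0)"
      unfolding eventually_at_right_field using p by auto
    have "((\<lambda>r. y + r *\<^sub>R \<eta> y) \<longlongrightarrow> y + 0 *\<^sub>R \<eta> y) (at_right 0)" by (intro tendsto_intros)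
    then have "((\<lambda>r. y + r *\<^sub>R \<eta> y) \<longlongrightarrow> y) (at_right 0)" by simp
    then have "((\<lambda>r. f (y + r *\<^sub>R \<eta> y)) \<longlongrightarrow> f y) (at_right 0)" by (rule isCont_tendsto_compose[OF fc])
    then have e2: "eventually (\<lambda>r. f (y + r *\<^sub>R \<eta> y) < c) (at_right 0)" using y(2) by (rule order_tendstoD)
    show ?thesis using eventually_conj[OF e1 e2]
      by eventually_elim (auto simp: Ar_def inner_parallel_def CX_def)
  qed
  have cA0: "compact A0"
  proof -
    have "closed (f -` {..c})" using continuous_closed_vimage[OF closed_atMost fc] by simp
    then show ?thesis unfolding A0_def using cX by (intro compact_Int_closed)
  qed
  have F5: "eventually (\<lambda>r. \<forall>b\<in>A0. \<exists>y\<in>Ar r. dist b y < e) (at_right 0)" if e: "e > 0" for e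
  proof -
    have "\<forall>b\<in>A0. \<exists>y. y \<in> interior X \<and> dist y b < e/2 \<and> f y < c"
    proof
      fix b assume "b \<in> A0"
      then have "b \<in> X" "f b \<le> c" unfolding A0_def by auto
      from key_point[OF cl ur[unfolded CX_def] fd assms(3) this, of "e/2"] e
      show "\<exists>y. y \<in> interior X \<and> dist y b < e/2 \<and> f y < c" by auto
    qed
    then obtain Y where Y: "\<forall>b\<in>A0. Y b \<in> interior X \<and> dist (Y b) b < e/2 \<and> f (Y b) < c"
      by metis
    have "A0 \<subseteq> (\<Union>b\<in>A0. ball b (e/2))" using e by auto
    then obtain C where C: "C \<subseteq> A0" "finite C" "A0 \<subseteq> (\<Union>b\<in>C. ball b (e/2))"
      using compactE_image[OF cA0, of A0 "\<lambda>b. ball b (e/2)"] by auto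
    have "eventually (\<lambda>r. \<forall>b\<in>C. Y b \<in> Ar r) (at_right 0)"
      using C Y by (intro eventually_ball_finite) (auto intro!: ev_in)
    then show ?thesis
    proof (rule eventually_mono)
      fix r assume r: "\<forall>b\<in>C. Y b \<in> Ar r"
      show "\<forall>b\<in>A0. \<exists>y\<in>Ar r. dist b y < e"
      proof
        fix b assume "b \<in> A0"
        then obtain b' where b': "b' \<in> C" "dist b' b < e/2" using C(3) by auto
        have "dist b (Y b') \<le> dist b b' + dist b' (Y b')" by (rule dist_triangle)
        moreover have "dist b' (Y b') < e/2" using Y b' C(1) by (auto simp: dist_commute)
        ultimately have "dist b (Y b') < e" using b' by (simp add: dist_commute)
        then show "\<exists>y\<in>Ar r. dist b y < e" using r b' by auto
      qed
    qed
  qed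
  have F6: "eventually (\<lambda>r. \<forall>a\<in>Ar r. \<exists>b\<in>A0. dist a b < e) (at_right 0)" if e: "e > 0" for e
  proof -
    define K where "K = X - (\<Union>b\<in>A0. ball b e)"
    have cK: "compact K" unfolding K_def using cX by (intro compact_diff) auto
    define V where "V = {z. f z \<le> c}"
    have cV: "closed V" unfolding V_def by (rule closed_Collect_le[OF fcon continuous_on_const])
    have "K \<inter> V = {}"
    proof (rule ccontr)
      assume "K \<inter> V \<noteq> {}"
      then obtain z where "z \<in> K" "z \<in> V" by auto
      then have "z \<in> A0" by (auto simp: K_def V_def A0_def)
      then show False using \<open>z \<in> K\<close> e by (auto simp: K_def)
    qed
    from separate_compact_closed[OF cK cV this]
    obtain d where d: "d > 0" "\<forall>x\<in>K. \<forall>y\<in>V. d \<le> dist x y" by blast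
    have "eventually (\<lambda>r. 0 < r \<and> r < d) (at_right 0)"
      unfolding eventually_at_right_field using d by auto
    then show ?thesis
    proof (rule eventually_mono)
      fix r assume r: "0 < r \<and> r < d"
      show "\<forall>a\<in>Ar r. \<exists>b\<in>A0. dist a b < e"
      proof
        fix a assume a: "a \<in> Ar r"
        then have aX: "a \<in> X" using sub r by auto
        have "a + r *\<^sub>R \<eta> a \<in> V" using a by (simp add: Ar_def V_def)
        moreover have "dist a (a + r *\<^sub>R \<eta> a) < d"
        proof -
          have "dist a (a + r *\<^sub>R \<eta> a) = r * norm (\<eta> a)" using r by (simp add: dist_norm)
          also have "\<dots> \<le> r * 1" using assms(5) r by (intro mult_left_mono) auto
          finally show ?thesis using r by simp
        qed
        ultimately have "a \<notin> K" using d by force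
        then obtain b where "b \<in> A0" "a \<in> ball b e" using aX by (auto simp: K_def)
        then show "\<exists>b\<in>A0. dist a b < e" by (auto simp: dist_commute)
      qed
    qed
  qed
  have goal: "((\<lambda>r. hausdorff_dist (Ar r) A0) \<longlongrightarrow> 0) (at_right 0)"
  proof (cases "A0 = {}")
    case True
    have "eventually (\<lambda>r. hausdorff_dist (Ar r) A0 = 0) (at_right 0)"
      using F6[OF zero_less_one] by eventually_elim (auto simp: True hausdorff_dist_def)
    then show ?thesis by (rule tendsto_eventually)
  next
    case False
    then obtain b0 where b0: "b0 \<in> A0" by auto
    show ?thesis
    proof (rule order_tendstoI)
      fix a :: ereal assume "a < 0"
      then show "eventually (\<lambda>r. a < hausdorff_dist (Ar r) A0) (at_right 0)"
        using hd_nonneg order_less_le_trans by (intro always_eventually) blast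
    next
      fix a :: ereal assume a: "0 < a"
      define e where "e = (if a = \<infinity> then 1 else real_of_ereal a / 2)"
      have e: "0 < e \<and> ereal e < a"
      proof (cases a)
        case (real r)
        then show ?thesis using a by (auto simp: e_def)
      qed (use a in \<open>auto simp: e_def\<close>)
      then have e: "0 < e" "ereal e < a" by auto
      show "eventually (\<lambda>r. hausdorff_dist (Ar r) A0 < a) (at_right 0)"
        using eventually_conj[OF F5[OF e(1)] F6[OF e(1)]]
      proof eventually_elim
        case (elim r)
        then have "Ar r \<noteq> {}" using b0 by auto
        then have "hausdorff_dist (Ar r) A0 \<le> ereal e"
          using hd_bound[of "Ar r" A0 e] False elim by (auto simp: dist_commute)
        then show ?case using e by auto
      qed
    qed
  qed
  then show ?thesis by (simp add: Ar_def A0_def)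
qed

end
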